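(* Let $d\ge0$ be an integer. There exist an instance domain $\mathcal{X}$ and a hypothesis class $\mathcal{H}$ with Littlestone dimension $d$ such that the following holds for all integers $k,l\ge0$: if $k<l+d$, then for any $a\ge 0$ there exists a strategy of the adversary, all of whose presented sequences satisfy the $l$-bias assumption with respect to $\mathcal{H}$, such that any algorithm guaranteeing a cumulative mistake penalty of at most $k$ in the randomized prediction model must have cumulative abstention penalty at least $a$.
   Context: Randomized prediction model: at round $t$ the adversary presents $x_t\in\mathcal{X}$; the learner outputs $(p_{t,-},p_{t,+},1-p_{t,-}-p_{t,+})$ with $p_{t,-},p_{t,+}\ge0$, $p_{t,-}+p_{t,+}\le 1$ (probabilities of predicting $-1$, $+1$, abstaining); the adversary reveals $y_t\in\{-1,+1\}$. After $n$ rounds the cumulative mistake penalty is $\sum_{t=1}^n \big(I(y_t=-1)p_{t,+}+I(y_t=+1)p_{t,-}\big)$ and the cumulative abstention penalty is $\sum_{t=1}^n(1-p_{t,+}-p_{t,-})$. Hypotheses are maps $\mathcal{X}\to\{-1,+1\}$. $\mathcal{C}^l$ is the class of functions $x\mapsto 1-2I(x\in D)$ for $D\subseteq\mathcal{X}$, $|D|\le l$, and $\mathcal{H}^l=\{x\mapsto h(x)c(x): h\in\mathcal{H},c\in\mathcal{C}^l\}$. A sequence $(x_1,y_1),\dots,(x_n,y_n)$ satisfies the $l$-bias assumption w.r.t. $\mathcal{H}$ if some $h\in\mathcal{H}^l$ has $h(x_t)=y_t$ for all $t$. The Littlestone dimension of $\mathcal{H}$ is the largest $d$ such that there is a complete binary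 tree of depth $d$ with internal nodes labeled by points of $\mathcal{X}$ such that for every root-to-leaf path (left = label $-1$, right = label $+1$) some $h\in\mathcal{H}$ agrees with all labels on the path. *)

theory Defs
  imports Main "HOL-Library.Indicator_Function" Complex_Main
begin

definition hyp_class :: "'x set \<Rightarrow> ('x \<Rightarrow> int) set \<Rightarrow> bool" where
  "hyp_class X H \<longleftrightarrow> H \<subseteq> {h. \<forall>x\<in>X. h x \<in> {-1, 1}}"

text \<open>A complete binary tree of depth d with internal nodes labelled by points of X.
A node is addressed by the list of labels (left = -1, right = +1) on the path from the root.\<close>

definition shattered_tree :: "'x set \<Rightarrow> ('x \<Rightarrow> int) set \<Rightarrow> nat \<Rightarrow> (int list \<Rightarrow> 'x) \<Rightarrow> bool" where
  "shattered_tree X H d T \<longleftrightarrow>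
     (\<forall>s. length s < d \<and> set s \<subseteq> {-1, 1} \<longrightarrow> T s \<in> X) \<and>
     (\<forall>ys. length ys = d \<and> set ys \<subseteq> {-1, 1} \<longrightarrow>
        (\<exists>h\<in>H. \<forall>i<d. h (T (take i ys)) = ys ! i))"

definition littlestone_dim :: "'x set \<Rightarrow> ('x \<Rightarrow> int) set \<Rightarrow> nat \<Rightarrow> bool" where
  "littlestone_dim X H d \<longleftrightarrow>
     (\<exists>T. shattered_tree X H d T) \<and> (\<forall>d' T. shattered_tree X H d' T \<longrightarrow> d' \<le> d)"

definition flip_class :: "'x set \<Rightarrow> nat \<Rightarrow> ('x \<Rightarrow> int) set" where
  "flip_class X l = {(\<lambda>x. 1 - 2 * indicator D x) | D. D \<subseteq> X \<and> finite D \<and> card D \<le> l}"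

definition biased_class :: "'x set \<Rightarrow> ('x \<Rightarrow> int) set \<Rightarrow> nat \<Rightarrow> ('x \<Rightarrow> int) set" where
  "biased_class X H l = {(\<lambda>x. h x * c x) | h c. h \<in> H \<and> c \<in> flip_class X l}"

definition l_bias :: "'x set \<Rightarrow> ('x \<Rightarrow> int) set \<Rightarrow> nat \<Rightarrow> ('x \<times> int) list \<Rightarrow> bool" where
  "l_bias X H l seq \<longleftrightarrow> (\<exists>h\<in>biased_class X H l. \<forall>(x, y)\<in>set seq. h x = y)"

text \<open>A history entry is (x_t, (p_{t,-}, p_{t,+}), y_t).\<close>

type_synonym 'x hist = "('x \<times> (real \<times> real) \<times> int) list"

definition valid_learner :: "(('x \<times> int) list \<Rightarrow> 'x \<Rightarrow> real \<times> real) \<Rightarrow> bool" where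
  "valid_learner L \<longleftrightarrow> (\<forall>s x. 0 \<le> fst (L s x) \<and> 0 \<le> snd (L s x) \<and> fst (L s x) + snd (L s x) \<le> 1)"

definition labelled :: "'x hist \<Rightarrow> ('x \<times> int) list" where
  "labelled h = map (\<lambda>(x, p, y). (x, y)) h"

fun play :: "('x hist \<Rightarrow> 'x) \<Rightarrow> ('x hist \<Rightarrow> 'x \<Rightarrow> real \<times> real \<Rightarrow> int)
              \<Rightarrow> (('x \<times> int) list \<Rightarrow> 'x \<Rightarrow> real \<times> real) \<Rightarrow> nat \<Rightarrow> 'x hist" where
  "play ax ay L 0 = []"
| "play ax ay L (Suc t) =
     (let h = play ax ay L t; x = ax h; p = L (labelled h) x; y = ay h x p
      in h @ [(x, p, y)])"

definition mistake_penalty :: "'x hist \<Rightarrow> real" where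
  "mistake_penalty h = (\<Sum>(x, (pm, pp), y)\<leftarrow>h.
      (if y = -1 then pp else 0) + (if y = 1 then pm else 0))"

definition abstention_penalty :: "'x hist \<Rightarrow> real" where
  "abstention_penalty h = (\<Sum>(x, (pm, pp), y)\<leftarrow>h. 1 - pp - pm)"

end

theory Submission
  imports Defs
begin

definition Hc :: "nat \<Rightarrow> (nat \<Rightarrow> int) set" where
  "Hc d = {h. (\<forall>x. h x \<in> {-1,1}) \<and> finite {x. h x = -1} \<and> card {x. h x = -1} \<le> d}"

lemma path_exists:
  fixes T :: "int list \<Rightarrow> nat"
  shows "\<exists>s. length s = n \<and> set s \<subseteq> {-1,1} \<and>
   ((\<exists>i j. j < i \<and> i < n \<and> T (take i s) = T (take j s) \<and> s!i \<noteq> s!j) \<or>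
    (s = replicate n (-1) \<and> inj_on (\<lambda>i. T (take i s)) {..<n}))"
proof (induction n)
  case 0 show ?case by simp
next
  case (Suc n)
  then obtain s where len: "length s = n" and st: "set s \<subseteq> {-1,1}" and
    P: "(\<exists>i j. j < i \<and> i < n \<and> T (take i s) = T (take j s) \<and> s!i \<noteq> s!j) \<or>
    (s = replicate n (-1) \<and> inj_on (\<lambda>i. T (take i s)) {..<n})" by blast
  have tk: "\<And>i v. i \<le> n \<Longrightarrow> take i (s @ [v]) = take i s" using len by simp
  have nt: "\<And>i v. i < n \<Longrightarrow> (s @ [v]) ! i = s ! i" using len by (simp add: nth_append)
  have ntn: "\<And>v. (s @ [v]) ! n = v" using len by (metis nth_append_length)
  show ?case
  proof (cases "\<exists>i j. j < i \<and> i < n \<and> T (take i s) = T (take j s) \<and> s!i \<noteq> s!j")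
    case True
    then obtain i j where ij: "j < i" "i < n" "T (take i s) = T (take j s)" "s!i \<noteq> s!j" by blast
    have e1: "take i (s @ [-1]) = take i s" "take j (s @ [-1]) = take j s"
      "(s @ [-1]) ! i = s ! i" "(s @ [-1]) ! j = s ! j" using ij tk nt by auto
    show ?thesis
    proof (intro exI[of _ "s @ [-1]"] conjI disjI1)
      show "length (s@[-1]) = Suc n" using len by simp
      show "set (s@[-1]) \<subseteq> {-1,1}" using st by auto
      show "\<exists>i j. j < i \<and> i < Suc n \<and> T (take i (s @ [- 1])) = T (take j (s @ [- 1])) \<and> (s @ [- 1]) ! i \<noteq> (s @ [- 1]) ! j"
        using ij e1 by (intro exI[of _ i] exI[of _ j]) auto
    qed
  next
    case False
    with P have rep: "s = replicate n (-1)" and inj: "inj_on (\<lambda>i. T (take i s)) {..<n}" by auto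
    show ?thesis
    proof (cases "\<exists>j<n. T (take j s) = T s")
      case True
      then obtain j where j: "j < n" "T (take j s) = T s" by blast
      have "s ! j = -1" using rep j by simp
      show ?thesis
      proof (intro exI[of _ "s @ [1]"] conjI disjI1)
        show "length (s@[1]) = Suc n" using len by simp
        show "set (s@[1]) \<subseteq> {-1,1}" using st by auto
        have e1: "take n (s @ [1]) = take n s" "take j (s @ [1]) = take j s"
          "(s @ [1]) ! n = 1" "(s @ [1]) ! j = -1" "take n s = s"
          using j tk nt ntn len \<open>s ! j = -1\<close> by auto
        show "\<exists>i j. j < i \<and> i < Suc n \<and> T (take i (s @ [1])) = T (take j (s @ [1])) \<and> (s @ [1]) ! i \<noteq> (s @ [1]) ! j"
          using j e1 by (intro exI[of _ n] exI[of _ j]) auto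
      qed
    next
      case False
      have inj2: "inj_on (\<lambda>i. T (take i (s @ [-1]))) {..<n}"
      proof -
        have "inj_on (\<lambda>i. T (take i (s @ [-1]))) {..<n} = inj_on (\<lambda>i. T (take i s)) {..<n}"
          by (rule inj_on_cong) (auto simp: len)
        thus ?thesis using inj by simp
      qed
      have "inj_on (\<lambda>i. T (take i (s @ [-1]))) (insert n {..<n})"
        using inj2 False tk len by auto
      moreover have "insert n {..<n} = {..<Suc n}" by auto
      ultimately show ?thesis
        apply (intro exI[of _ "s @ [-1]"])
        using rep st len by (auto simp: replicate_append_same)
    qed
  qed
qed

lemma ldim: "littlestone_dim UNIV (Hc d) d"
  unfolding littlestone_dim_def
proof (intro conjI allI impI)
  show "\<exists>T. shattered_tree UNIV (Hc d) d T"
  proof (intro exI[of _ "length"], unfold shattered_tree_def, intro conjI allI impI)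
    fix ys :: "int list" assume a: "length ys = d \<and> set ys \<subseteq> {-1, 1}"
    define h where "h = (\<lambda>x. if x < d then ys ! x else 1)"
    have "\<forall>x. h x \<in> {-1,1}" using a nth_mem unfolding h_def by fastforce
    moreover have "{x. h x = -1} \<subseteq> {..<d}" unfolding h_def by auto
    hence "finite {x. h x = -1}" "card {x. h x = -1} \<le> d"
      by (auto intro: finite_subset dest: card_mono[rotated])
    ultimately have "h \<in> Hc d" unfolding Hc_def by auto
    moreover have "\<forall>i<d. h (length (take i ys)) = ys ! i" using a unfolding h_def by auto
    ultimately show "\<exists>h\<in>Hc d. \<forall>i<d. h (length (take i ys)) = ys ! i" by blast
  qed auto
next
  fix d' T assume sh: "shattered_tree UNIV (Hc d) d' T"
  obtain s where len: "length s = d'" and st: "set s \<subseteq> {-1,1}" and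
    P: "(\<exists>i j. j < i \<and> i < d' \<and> T (take i s) = T (take j s) \<and> s!i \<noteq> s!j) \<or>
    (s = replicate d' (-1) \<and> inj_on (\<lambda>i. T (take i s)) {..<d'})"
    using path_exists[of d' T] by blast
  from sh len st obtain h where h: "h \<in> Hc d" and hp: "\<forall>i<d'. h (T (take i s)) = s ! i"
    unfolding shattered_tree_def by blast
  from P show "d' \<le> d"
  proof
    assume "\<exists>i j. j < i \<and> i < d' \<and> T (take i s) = T (take j s) \<and> s!i \<noteq> s!j"
    then obtain i j where "j < i" "i < d'" "T (take i s) = T (take j s)" "s!i \<noteq> s!j" by blast
    with hp have False by (metis order.strict_trans)
    thus ?thesis ..
  next
    assume b: "s = replicate d' (-1) \<and> inj_on (\<lambda>i. T (take i s)) {..<d'}"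
    have sub: "(\<lambda>i. T (take i s)) ` {..<d'} \<subseteq> {x. h x = -1}" using b hp by auto
    have "d' = card ((\<lambda>i. T (take i s)) ` {..<d'})" using card_image[OF conjunct2[OF b]] by simp
    also have "\<dots> \<le> card {x. h x = -1}" using h sub unfolding Hc_def by (auto intro: card_mono)
    also have "\<dots> \<le> d" using h unfolding Hc_def by auto
    finally show ?thesis .
  qed
qed

definition cntm :: "nat hist \<Rightarrow> nat" where
  "cntm hs = length (filter (\<lambda>(x,p,y). y = -1) hs)"
definition advx :: "nat hist \<Rightarrow> nat" where "advx hs = length hs"
definition advy :: "nat \<Rightarrow> real \<Rightarrow> nat hist \<Rightarrow> nat \<Rightarrow> real \<times> real \<Rightarrow> int" where
  "advy m \<tau> hs x p = (if cntm hs < m \<and> snd p > \<tau> then -1 else 1)"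

lemma play_S: "play advx ay L (Suc t) = play advx ay L t @
   [(length (play advx ay L t), L (labelled (play advx ay L t)) (length (play advx ay L t)),
     ay (play advx ay L t) (length (play advx ay L t)) (L (labelled (play advx ay L t)) (length (play advx ay L t))))]"
  by (simp add: Let_def advx_def)

declare play.simps(2)[simp del]

lemma len_play: "length (play advx ay L t) = t"
  by (induction t) (simp_all add: play_S)

lemma fst_play: "i < t \<Longrightarrow> fst (play advx ay L t ! i) = i"
proof (induction t)
  case 0 thus ?case by simp
next
  case (Suc t) thus ?case by (cases "i < t") (auto simp: play_S nth_append len_play)
qed

lemma lab_play: "e \<in> set (play advx (advy m \<tau>) L t) \<Longrightarrow> snd (snd e) \<in> {-1,1}"
  by (induction t arbitrary: e) (auto simp: play_S advy_def split: if_splits)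

lemma cntm_app: "cntm (h @ [(x,p,y)]) = cntm h + (if y = -1 then 1 else 0)"
  by (simp add: cntm_def)

lemma cnt_play: "cntm (play advx (advy m \<tau>) L t) \<le> m"
proof (induction t)
  case 0 thus ?case by (simp add: cntm_def)
next
  case (Suc t) thus ?case by (auto simp: play_S cntm_app advy_def)
qed

lemma mp_app: "mistake_penalty (h @ [(x,(pm,pp),y)]) = mistake_penalty h + ((if y = -1 then pp else 0) + (if y = 1 then pm else 0))"
  by (simp add: mistake_penalty_def)
lemma ap_app: "abstention_penalty (h @ [(x,(pm,pp),y)]) = abstention_penalty h + (1 - pp - pm)"
  by (simp add: abstention_penalty_def)

lemma game_inv:
  fixes \<tau> :: real
  assumes vl: "valid_learner L" and tau: "0 \<le> \<tau>" "\<tau> \<le> 1"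
  shows "let h = play advx (advy m \<tau>) L t in
     mistake_penalty h \<ge> real (cntm h) * \<tau> \<and> (cntm h > 0 \<longrightarrow> mistake_penalty h > real (cntm h) * \<tau>) \<and>
     (cntm h < m \<longrightarrow> abstention_penalty h + mistake_penalty h \<ge> (real t - cntm h) * (1 - \<tau>) + real (cntm h) * \<tau>)"
proof (induction t)
  case 0 thus ?case by (simp add: cntm_def mistake_penalty_def abstention_penalty_def)
next
  case (Suc t)
  define h where "h = play advx (advy m \<tau>) L t"
  obtain pm pp where Lp: "L (labelled h) t = (pm, pp)" by fastforce
  have v: "0 \<le> pm" "0 \<le> pp" "pm + pp \<le> 1" using vl Lp unfolding valid_learner_def
    by (metis fst_conv snd_conv)+
  have IH: "mistake_penalty h \<ge> real (cntm h) * \<tau>" "cntm h > 0 \<longrightarrow> mistake_penalty h > real (cntm h) * \<tau>"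
     "cntm h < m \<longrightarrow> abstention_penalty h + mistake_penalty h \<ge> (real t - cntm h) * (1 - \<tau>) + real (cntm h) * \<tau>"
    using Suc unfolding h_def Let_def by auto
  have lh: "length h = t" unfolding h_def by (simp add: len_play)
  have ps: "play advx (advy m \<tau>) L (Suc t) = h @ [(t, (pm,pp), advy m \<tau> h t (pm,pp))]"
    unfolding h_def using Lp[unfolded h_def] by (simp add: play_S len_play)
  show ?case
  proof (cases "cntm h < m \<and> pp > \<tau>")
    case True
    hence y: "advy m \<tau> h t (pm,pp) = -1" by (simp add: advy_def)
    show ?thesis unfolding ps Let_def y cntm_app mp_app ap_app using IH v True tau
      by (auto simp: algebra_simps)
  next
    case False
    hence y: "advy m \<tau> h t (pm,pp) = 1" by (auto simp: advy_def)
    show ?thesis unfolding ps Let_def y cntm_app mp_app ap_app using IH v False tau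
      by (auto simp: algebra_simps)
  qed
qed

lemma bias_play:
  fixes \<tau> :: real
  shows "l_bias UNIV (Hc d) l (labelled (play advx (advy (l+d) \<tau>) L t))"
proof -
  define P where "P = play advx (advy (l+d) \<tau>) L t"
  have lP: "length P = t" unfolding P_def by (simp add: len_play)
  define g where "g = (\<lambda>x. if x < t then snd (snd (P ! x)) else 1)"
  define N where "N = {x. g x = -1}"
  have gv: "g x \<in> {-1,1}" for x
    using lab_play[of "P ! x" "l+d" \<tau> L t] lP unfolding g_def P_def by auto
  have N_eq: "N = {i. i < length P \<and> (\<lambda>(x,p,y). y = -1) (P ! i)}"
    unfolding N_def g_def lP by (auto simp: case_prod_beta)
  have fin: "finite N" unfolding N_eq by auto
  have cN: "card N = cntm P" unfolding N_eq cntm_def length_filter_conv_card ..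
  hence cN2: "card N \<le> l + d" using cnt_play unfolding P_def by metis
  obtain N0 where N0: "N0 \<subseteq> N" "card N0 = min d (card N)" "finite N0"
    using obtain_subset_with_card_n[of "min d (card N)" N] by auto
  define D where "D = N - N0"
  have cD: "card D \<le> l" unfolding D_def using N0 fin cN2 by (simp add: card_Diff_subset)
  define h0 :: "nat \<Rightarrow> int" where "h0 = (\<lambda>x. if x \<in> N0 then -1 else 1)"
  define c :: "nat \<Rightarrow> int" where "c = (\<lambda>x. 1 - 2 * indicator D x)"
  have "{x. h0 x = -1} = N0" unfolding h0_def by auto
  hence h0H: "h0 \<in> Hc d" unfolding Hc_def using N0 by (auto simp: h0_def)
  have cC: "c \<in> flip_class UNIV l" unfolding flip_class_def c_def
    using cD fin D_def by auto
  have hg: "(\<lambda>x. h0 x * c x) = g"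
  proof
    fix x
    show "h0 x * c x = g x"
      using gv[of x] N0(1) unfolding h0_def c_def D_def N_def by (auto simp: indicator_def)
  qed
  have gb: "g \<in> biased_class UNIV (Hc d) l" unfolding biased_class_def
    using h0H cC hg by blast
  have "\<forall>(x, y)\<in>set (labelled P). g x = y"
  proof (clarify)
    fix x y assume "(x, y) \<in> set (labelled P)"
    then obtain i where i: "i < t" "labelled P ! i = (x,y)"
      by (auto simp: in_set_conv_nth labelled_def lP)
    have "labelled P ! i = (fst (P!i), snd (snd (P!i)))"
      using i lP by (auto simp: labelled_def case_prod_beta)
    moreover have "fst (P ! i) = i" using i fst_play unfolding P_def by metis
    ultimately show "g x = y" using i unfolding g_def by auto
  qed
  thus ?thesis unfolding l_bias_def P_def[symmetric] using gb by blast
qed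

theorem mainTheorem4:
  fixes d :: nat
  shows "\<exists>(X :: nat set) (H :: (nat \<Rightarrow> int) set).
    hyp_class X H \<and> littlestone_dim X H d \<and>
    (\<forall>k l :: nat. k < l + d \<longrightarrow>
      (\<forall>a :: real. a \<ge> 0 \<longrightarrow>
        (\<exists>(n :: nat) (ax :: nat hist \<Rightarrow> nat) (ay :: nat hist \<Rightarrow> nat \<Rightarrow> real \<times> real \<Rightarrow> int).
           (\<forall>hs. ax hs \<in> X) \<and>
           (\<forall>L. valid_learner L \<longrightarrow> l_bias X H l (labelled (play ax ay L n))) \<and>
           (\<forall>L. valid_learner L \<longrightarrow> mistake_penalty (play ax ay L n) \<le> real k \<longrightarrow>
                abstention_penalty (play ax ay L n) \<ge> a))))"
  apply (rule exI[of _ UNIV])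
  apply (rule exI[of _ "Hc d"])
proof (intro conjI allI impI)
  show "hyp_class UNIV (Hc d)" unfolding hyp_class_def Hc_def by auto
  show "littlestone_dim UNIV (Hc d) d" by (rule ldim)
  fix k l :: nat and a :: real
  assume kl: "k < l + d" and a: "0 \<le> a"
  define m where "m = l + d"
  define \<tau> :: real where "\<tau> = real k / real m"
  have mpos: "m > 0" using kl m_def by auto
  have t0: "0 \<le> \<tau>" "\<tau> < 1" using kl mpos unfolding \<tau>_def m_def by auto
  have mt: "real m * \<tau> = real k" using mpos unfolding \<tau>_def by simp
  define n where "n = m + nat \<lceil>(a + k) / (1 - \<tau>)\<rceil>"
  have nb: "(real n - real m) * (1 - \<tau>) \<ge> a + k"
  proof -
    have "real n - real m = real (nat \<lceil>(a + k) / (1 - \<tau>)\<rceil>)" unfolding n_def by simp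
    also have "\<dots> \<ge> (a + k) / (1 - \<tau>)" by linarith
    finally have "(a + k) / (1 - \<tau>) \<le> real n - real m" .
    thus ?thesis using t0 by (simp add: pos_divide_le_eq)
  qed
  show "\<exists>n ax ay. (\<forall>hs. ax hs \<in> UNIV) \<and>
           (\<forall>L. valid_learner L \<longrightarrow> l_bias UNIV (Hc d) l (labelled (play ax ay L n))) \<and>
           (\<forall>L. valid_learner L \<longrightarrow> mistake_penalty (play ax ay L n) \<le> real k \<longrightarrow>
                abstention_penalty (play ax ay L n) \<ge> a)"
  proof (intro exI[of _ n] exI[of _ advx] exI[of _ "advy m \<tau>"] conjI allI impI)
    fix L show "l_bias UNIV (Hc d) l (labelled (play advx (advy m \<tau>) L n))"
      unfolding m_def by (rule bias_play)
  next
    fix L assume vl: "valid_learner L" and mk: "mistake_penalty (play advx (advy m \<tau>) L n) \<le> real k"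
    define h where "h = play advx (advy m \<tau>) L n"
    have inv: "mistake_penalty h \<ge> real (cntm h) * \<tau>" "cntm h > 0 \<longrightarrow> mistake_penalty h > real (cntm h) * \<tau>"
     "cntm h < m \<longrightarrow> abstention_penalty h + mistake_penalty h \<ge> (real n - cntm h) * (1 - \<tau>) + real (cntm h) * \<tau>"
      using game_inv[OF vl t0(1), of m n] t0 unfolding h_def Let_def by auto
    have cm: "cntm h \<le> m" unfolding h_def by (rule cnt_play)
    have cl: "cntm h < m"
    proof (rule ccontr)
      assume "\<not> cntm h < m" hence "cntm h = m" using cm by simp
      thus False using inv(2) mpos mt mk unfolding h_def by auto
    qed
    have A: "abstention_penalty h \<ge> (real n - cntm h) * (1 - \<tau>) - k"
      using inv(3) cl mk t0 unfolding h_def by (smt (verit) mult_nonneg_nonneg of_nat_0_le_iff)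
    have "(real n - real m) * (1 - \<tau>) \<le> (real n - cntm h) * (1 - \<tau>)"
      using cl t0 by (intro mult_right_mono) auto
    thus "a \<le> abstention_penalty (play advx (advy m \<tau>) L n)"
      using A nb unfolding h_def by linarith
  qed simp
qed

end
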